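(* Let $m\ge2$ and capacities $B_1,\dots,B_m>0$. Fix an online fractional scheduling algorithm whose output satisfies average block size $B=(B_j)$ with slackness $\Delta(T)=o(T)$ and which uses extension $\Gamma(T)=o(T)$. Then for every horizon $T$ there is an input consisting only of fully patient transactions ($\rho_i=0$ for all $i$) such that the algorithm's output $x$ satisfies $$\frac{SW_{[1:T+\Gamma(T)]}(x)}{SW_{[1:T]}(y)}\le \frac78+o(1),$$ where $y$ is the optimal integral allocation for horizon $T$ respecting the per-block limits $B_j$, and $o(1)$ is as $T\to\infty$.
   Context: Online block packing: $m$ resources with capacities $B_j>0$; transactions $i$ with arrival time $a_i\in\{1,2,\dots\}$, base value $v_i\ge0$, discount $\rho_i\in[0,1]$, demand $w_i\in\mathbb{R}_+^m$; value in block $t\ge a_i$ is $v_i^t=v_i(1-\rho_i)^{t-a_i}$. A fractional allocation is $x=\{x_i^t\}$ with $x_i^t\in[0,1]$, $x_i^t=0$ for $t<a_i$, $\sum_tx_i^t\le1$; integral if all entries are in $\{0,1\}$; it respects per-block limits if $\sum_iw_{ij}x_i^t\le B_j$ for all $t,j$. It has average block size $B$ with slackness $\Delta$ if for all $T_0,K\ge1$ and $j$: $\sum_{t=T_0}^{T_0+K-1}\sum_ix_i^tw_{ij}\le(K+\Delta)B_j$. $SW_{[1:T]}(x)=\sum_{t=1}^T\sum_ix_i^tv_i^t$. An online algorithm decides block $t$ using only transactions with $a_i\le t$; "uses extension $\Gamma$" means its welfare is measured up to time $T+\Gamma$ when compared with the benchmark up to $T$. *)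

theory Defs
  imports "HOL-Analysis.Analysis" "HOL-Library.Landau_Symbols"
begin

text \<open>A transaction: arrival time a, base value v, discount rho, demand vector w
  (resources indexed by j < m).\<close>
record tx =
  arr  :: nat
  val  :: real
  disc :: real
  dem  :: "nat \<Rightarrow> real"

type_synonym input = "nat \<Rightarrow> tx option"

text \<open>An allocation: x i t is the fraction of transaction i put into block t.\<close>
type_synonym alloc = "nat \<Rightarrow> nat \<Rightarrow> real"

definition valid_tx :: "nat \<Rightarrow> tx \<Rightarrow> bool" where
  "valid_tx m tr \<longleftrightarrow> arr tr \<ge> 1 \<and> val tr \<ge> 0 \<and> 0 \<le> disc tr \<and> disc tr \<le> 1
     \<and> (\<forall>j<m. dem tr j \<ge> 0)"

definition valid_input :: "nat \<Rightarrow> input \<Rightarrow> bool" where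
  "valid_input m I \<longleftrightarrow> finite (dom I) \<and> (\<forall>i tr. I i = Some tr \<longrightarrow> valid_tx m tr)"

definition value_at :: "tx \<Rightarrow> nat \<Rightarrow> real" where
  "value_at tr t = val tr * (1 - disc tr) ^ (t - arr tr)"

definition fractional_alloc :: "input \<Rightarrow> alloc \<Rightarrow> bool" where
  "fractional_alloc I x \<longleftrightarrow>
     (\<forall>i\<in>dom I. (\<forall>t. 0 \<le> x i t \<and> x i t \<le> 1)
              \<and> (\<forall>t. t < arr (the (I i)) \<longrightarrow> x i t = 0)
              \<and> (\<forall>N. (\<Sum>t<N. x i t) \<le> 1))"

definition integral_alloc :: "input \<Rightarrow> alloc \<Rightarrow> bool" where
  "integral_alloc I x \<longleftrightarrow> fractional_alloc I x \<and> (\<forall>i\<in>dom I. \<forall>t. x i t \<in> {0, 1})"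

definition respects_limits :: "nat \<Rightarrow> (nat \<Rightarrow> real) \<Rightarrow> input \<Rightarrow> alloc \<Rightarrow> bool" where
  "respects_limits m B I x \<longleftrightarrow>
     (\<forall>t. \<forall>j<m. (\<Sum>i\<in>dom I. dem (the (I i)) j * x i t) \<le> B j)"

definition avg_block_size :: "nat \<Rightarrow> (nat \<Rightarrow> real) \<Rightarrow> real \<Rightarrow> input \<Rightarrow> alloc \<Rightarrow> bool" where
  "avg_block_size m B \<Delta> I x \<longleftrightarrow>
     (\<forall>T0\<ge>1. \<forall>K\<ge>1. \<forall>j<m.
        (\<Sum>t\<in>{T0..<T0+K}. \<Sum>i\<in>dom I. x i t * dem (the (I i)) j) \<le> (real K + \<Delta>) * B j)"

definition SW :: "nat \<Rightarrow> input \<Rightarrow> alloc \<Rightarrow> real" where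
  "SW N I x = (\<Sum>t\<in>{1..N}. \<Sum>i\<in>dom I. x i t * value_at (the (I i)) t)"

definition opt_integral :: "nat \<Rightarrow> (nat \<Rightarrow> real) \<Rightarrow> nat \<Rightarrow> input \<Rightarrow> alloc \<Rightarrow> bool" where
  "opt_integral m B T I y \<longleftrightarrow>
     integral_alloc I y \<and> respects_limits m B I y \<and>
     (\<forall>y'. integral_alloc I y' \<and> respects_limits m B I y' \<longrightarrow> SW T I y' \<le> SW T I y)"

definition arrived :: "nat \<Rightarrow> input \<Rightarrow> input" where
  "arrived t I = (\<lambda>i. case I i of None \<Rightarrow> None
                     | Some tr \<Rightarrow> if arr tr \<le> t then Some tr else None)"

text \<open>An online algorithm (possibly knowing the horizon T): its decision for block t
  about the arrived transactions depends only on the transactions arrived by t.\<close>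
definition online :: "nat \<Rightarrow> (nat \<Rightarrow> input \<Rightarrow> alloc) \<Rightarrow> bool" where
  "online m A \<longleftrightarrow>
     (\<forall>T I J t. valid_input m I \<and> valid_input m J \<and> arrived t I = arrived t J \<longrightarrow>
        (\<forall>i\<in>dom (arrived t I). A T I i t = A T J i t))"

end

theory Submission
  imports Defs
begin

definition mkI :: "tx \<Rightarrow> tx \<Rightarrow> tx \<Rightarrow> nat \<Rightarrow> nat \<Rightarrow> input" where
  "mkI a c p h T = (\<lambda>i. if i < h then Some a else if i < 2*h then Some c
                         else if i < h + T then Some p else None)"

lemma dom_mkI: "h \<le> T \<Longrightarrow> dom (mkI a c p h T) = {..<h+T}"
  unfolding mkI_def dom_def by auto

lemma the_mkI:
  "i < h \<Longrightarrow> the (mkI a c p h T i) = a"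
  "h \<le> i \<Longrightarrow> i < 2*h \<Longrightarrow> the (mkI a c p h T i) = c"
  "2*h \<le> i \<Longrightarrow> i < h+T \<Longrightarrow> the (mkI a c p h T i) = p"
  unfolding mkI_def by auto

lemma sum_split3:
  fixes f :: "nat \<Rightarrow> real"
  assumes "h \<le> T"
  shows "(\<Sum>i<h+T. f i) = (\<Sum>i<h. f i) + (\<Sum>i\<in>{h..<2*h}. f i) + (\<Sum>i\<in>{2*h..<h+T}. f i)"
proof -
  have "(\<Sum>i<h+T. f i) = (\<Sum>i\<in>{0..<h}. f i) + (\<Sum>i\<in>{h..<h+T}. f i)"
    by (simp add: lessThan_atLeast0 sum.atLeastLessThan_concat)
  moreover have "(\<Sum>i\<in>{h..<h+T}. f i) = (\<Sum>i\<in>{h..<2*h}. f i) + (\<Sum>i\<in>{2*h..<h+T}. f i)"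
    using assms by (simp add: sum.atLeastLessThan_concat)
  ultimately show ?thesis by (simp add: lessThan_atLeast0)
qed

lemma sum_mkI:
  fixes f :: "nat \<Rightarrow> real" and g :: "tx \<Rightarrow> real"
  assumes "h \<le> T"
  shows "(\<Sum>i\<in>dom (mkI a c p h T). g (the (mkI a c p h T i)) * f i) =
     g a * (\<Sum>i<h. f i) + g c * (\<Sum>i\<in>{h..<2*h}. f i) + g p * (\<Sum>i\<in>{2*h..<h+T}. f i)"
proof -
  have "(\<Sum>i\<in>dom (mkI a c p h T). g (the (mkI a c p h T i)) * f i)
     = (\<Sum>i<h. g (the (mkI a c p h T i)) * f i) + (\<Sum>i\<in>{h..<2*h}. g (the (mkI a c p h T i)) * f i)
       + (\<Sum>i\<in>{2*h..<h+T}. g (the (mkI a c p h T i)) * f i)"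
    using assms sum_split3[OF assms, of "\<lambda>i. g (the (mkI a c p h T i)) * f i"] by (simp add: dom_mkI)
  also have "\<dots> = g a * (\<Sum>i<h. f i) + g c * (\<Sum>i\<in>{h..<2*h}. f i) + g p * (\<Sum>i\<in>{2*h..<h+T}. f i)"
    by (simp add: the_mkI sum_distrib_left)
  finally show ?thesis .
qed

lemma valid_mkI:
  assumes "valid_tx m a" "valid_tx m c" "valid_tx m p"
  shows "valid_input m (mkI a c p h T)"
proof -
  have "dom (mkI a c p h T) \<subseteq> {..<2*h+T}" unfolding mkI_def dom_def by (auto split: if_splits)
  then have "finite (dom (mkI a c p h T))" by (rule finite_subset) simp
  then show ?thesis using assms unfolding valid_input_def mkI_def by (auto split: if_splits)
qed

lemma value_at0: "disc tr = 0 \<Longrightarrow> value_at tr t = val tr"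
  by (simp add: value_at_def)

lemma sum_mkI':
  fixes f :: "nat \<Rightarrow> real" and g :: "tx \<Rightarrow> real"
  assumes "h \<le> T"
  shows "(\<Sum>i\<in>dom (mkI a c p h T). f i * g (the (mkI a c p h T i))) =
     g a * (\<Sum>i<h. f i) + g c * (\<Sum>i\<in>{h..<2*h}. f i) + g p * (\<Sum>i\<in>{2*h..<h+T}. f i)"
  using sum_mkI[OF assms, where g=g and f=f and a=a and c=c and p=p] by (simp add: mult.commute)

lemma sum_le_single:
  fixes f :: "'a \<Rightarrow> real"
  assumes "finite S" "\<forall>i\<in>S. f i \<le> b" "\<forall>i\<in>S. \<forall>k\<in>S. f i \<noteq> 0 \<longrightarrow> f k \<noteq> 0 \<longrightarrow> i = k" "0 \<le> b"
  shows "sum f S \<le> b"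
proof (cases "\<exists>i\<in>S. f i \<noteq> 0")
  case True
  then obtain i where i: "i \<in> S" "f i \<noteq> 0" by blast
  have "sum f S = f i + sum f (S - {i})" using assms(1) i(1) by (simp add: sum.remove)
  also have "sum f (S - {i}) = 0" using assms(3) i by (intro sum.neutral) blast
  finally show ?thesis using assms(2) i(1) by simp
next
  case False
  then have "sum f S = 0" by (intro sum.neutral) blast
  then show ?thesis using assms(4) by simp
qed

lemma frac_tot:
  assumes "fractional_alloc I x" "i \<in> dom I"
  shows "(\<Sum>t\<in>{1..N}. x i t) \<le> 1"
proof -
  have nn: "\<forall>t. 0 \<le> x i t" and s: "(\<Sum>t<Suc N. x i t) \<le> 1"
    using assms unfolding fractional_alloc_def by blast+
  have "(\<Sum>t\<in>{1..N}. x i t) \<le> (\<Sum>t<Suc N. x i t)"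
    using nn by (intro sum_mono2) auto
  then show ?thesis using s by linarith
qed

lemma frac_nn: "fractional_alloc I x \<Longrightarrow> i \<in> dom I \<Longrightarrow> 0 \<le> x i t"
  unfolding fractional_alloc_def by blast

lemma frac_arr: "fractional_alloc I x \<Longrightarrow> i \<in> dom I \<Longrightarrow> t < arr (the (I i)) \<Longrightarrow> x i t = 0"
  unfolding fractional_alloc_def by blast

lemma sumA_le:
  assumes "h \<le> T" "fractional_alloc (mkI a c p h T) x"
  shows "(\<Sum>t\<in>{1..N}. \<Sum>i<h. x i t) \<le> real h"
proof -
  have "(\<Sum>t\<in>{1..N}. \<Sum>i<h. x i t) = (\<Sum>i<h. \<Sum>t\<in>{1..N}. x i t)" by (rule sum.swap)
  also have "\<dots> \<le> (\<Sum>i<h. 1)"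
    using assms by (intro sum_mono frac_tot[OF assms(2)]) (simp add: dom_mkI)
  finally show ?thesis by simp
qed

lemma split_1N:
  fixes f :: "nat \<Rightarrow> real"
  assumes "h < N"
  shows "(\<Sum>t\<in>{1..N}. f t) = (\<Sum>t\<in>{1..h}. f t) + (\<Sum>t\<in>{h+1..<h+1+(N-h)}. f t)"
proof -
  have "(\<Sum>t\<in>{1..N}. f t) = (\<Sum>t\<in>{1..<Suc N}. f t)" by (simp add: atLeastLessThanSuc_atLeastAtMost)
  also have "\<dots> = (\<Sum>t\<in>{1..<Suc h}. f t) + (\<Sum>t\<in>{Suc h..<Suc N}. f t)"
    by (rule sum.atLeastLessThan_concat[symmetric]) (use assms in auto)
  moreover have "{h+1..<h+1+(N-h)} = {Suc h..<Suc N}" using assms by auto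
  moreover have "{1..h} = {1..<Suc h}" by auto
  ultimately show ?thesis by simp
qed

lemma algY:
  fixes LA LC LP :: "nat \<Rightarrow> real"
  assumes sa: "(\<Sum>t\<in>{1..N}. LA t) \<le> h"
    and p0: "\<forall>t\<in>{1..h}. LP t = 0"
    and win: "(\<Sum>t\<in>{h+1..<h+1+(N-h)}. LC t + LP t) \<le> real (N-h) + D"
    and hN: "h < N"
  shows "(\<Sum>t\<in>{1..N}. LA t + 1/2*LC t + 1/2*LP t) \<le> h + 1/2*(\<Sum>t\<in>{1..h}. LC t) + 1/2*(real (N-h) + D)"
proof -
  have "(\<Sum>t\<in>{1..N}. LA t + 1/2*LC t + 1/2*LP t) = (\<Sum>t\<in>{1..N}. LA t) + 1/2*(\<Sum>t\<in>{1..N}. LC t + LP t)"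
    by (simp add: sum.distrib sum_distrib_left algebra_simps)
  also have "(\<Sum>t\<in>{1..N}. LC t + LP t) = (\<Sum>t\<in>{1..h}. LC t + LP t) + (\<Sum>t\<in>{h+1..<h+1+(N-h)}. LC t + LP t)"
    using split_1N[OF hN] .
  also have "(\<Sum>t\<in>{1..h}. LC t + LP t) = (\<Sum>t\<in>{1..h}. LC t)"
    using p0 by (simp add: sum.distrib)
  finally have E: "(\<Sum>t\<in>{1..N}. LA t + 1/2*LC t + 1/2*LP t) = (\<Sum>t\<in>{1..N}. LA t) + 1/2*((\<Sum>t\<in>{1..h}. LC t) + (\<Sum>t\<in>{h+1..<h+1+(N-h)}. LC t + LP t))" .
  have G: "\<And>a b c e::real. a \<le> real h \<Longrightarrow> c \<le> e + D \<Longrightarrow> a + 1/2*(b + c) \<le> real h + 1/2*b + 1/2*(e+D)" by argo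
  show ?thesis unfolding E by (rule G[OF sa win])
qed

lemma algX:
  fixes LA LC LP :: "nat \<Rightarrow> real"
  assumes nn: "\<forall>t. 0 \<le> LC t"
    and w1: "(\<Sum>t\<in>{1..<1+h}. LA t + LC t + LP t) \<le> real h + D"
    and w2: "(\<Sum>t\<in>{h+1..<h+1+(N-h)}. LA t + LC t + LP t) \<le> real (N-h) + D"
    and hN: "h < N"
  shows "(\<Sum>t\<in>{1..N}. LA t + 1/2*LC t + LP t) \<le> real N + 2*D - 1/2*(\<Sum>t\<in>{1..h}. LC t)"
proof -
  have e1: "(\<Sum>t\<in>{1..<1+h}. LA t + LC t + LP t) = (\<Sum>t\<in>{1..h}. LA t + LC t + LP t)"
    by (simp add: atLeastLessThanSuc_atLeastAtMost)
  have "(\<Sum>t\<in>{1..h}. LA t + 1/2*LC t + LP t) = (\<Sum>t\<in>{1..h}. LA t + LC t + LP t) - 1/2*(\<Sum>t\<in>{1..h}. LC t)"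
    by (simp add: sum.distrib sum_distrib_left sum_subtractf[symmetric] algebra_simps)
  moreover have "(\<Sum>t\<in>{h+1..<h+1+(N-h)}. LA t + 1/2*LC t + LP t) \<le> (\<Sum>t\<in>{h+1..<h+1+(N-h)}. LA t + LC t + LP t)"
    using nn by (intro sum_mono) auto
  moreover have "real h + real (N - h) = real N" using hN by simp
  ultimately show ?thesis using split_1N[OF hN, of "\<lambda>t. LA t + 1/2*LC t + LP t"] w1 w2 e1 by linarith
qed


definition tA :: "(nat \<Rightarrow> real) \<Rightarrow> tx" where
  "tA B = \<lparr>arr = 1, val = 1, disc = 0, dem = (\<lambda>j. if j = 0 then B 0 else 0)\<rparr>"
definition tC :: "(nat \<Rightarrow> real) \<Rightarrow> tx" where
  "tC B = \<lparr>arr = 1, val = 1/2, disc = 0, dem = (\<lambda>j. if j = 0 then B 0 else if j = 1 then B 1 else 0)\<rparr>"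
definition tX :: "(nat \<Rightarrow> real) \<Rightarrow> nat \<Rightarrow> tx" where
  "tX B h = \<lparr>arr = h+1, val = 1, disc = 0, dem = (\<lambda>j. if j = 0 then B 0 else 0)\<rparr>"
definition tY :: "(nat \<Rightarrow> real) \<Rightarrow> nat \<Rightarrow> tx" where
  "tY B h = \<lparr>arr = h+1, val = 1/2, disc = 0, dem = (\<lambda>j. if j = 1 then B 1 else 0)\<rparr>"

lemma tx_simps:
  "arr (tA B) = 1" "val (tA B) = 1" "disc (tA B) = 0" "dem (tA B) j = (if j = 0 then B 0 else 0)"
  "arr (tC B) = 1" "val (tC B) = 1/2" "disc (tC B) = 0" "dem (tC B) j = (if j = 0 then B 0 else if j = 1 then B 1 else 0)"
  "arr (tX B h) = h+1" "val (tX B h) = 1" "disc (tX B h) = 0" "dem (tX B h) j = (if j = 0 then B 0 else 0)"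
  "arr (tY B h) = h+1" "val (tY B h) = 1/2" "disc (tY B h) = 0" "dem (tY B h) j = (if j = 1 then B 1 else 0)"
  by (simp_all add: tA_def tC_def tX_def tY_def)

lemma valid_txs:
  assumes "\<forall>j<m. B j > 0" "m \<ge> 2"
  shows "valid_tx m (tA B)" "valid_tx m (tC B)" "valid_tx m (tX B h)" "valid_tx m (tY B h)"
  using assms by (auto simp: valid_tx_def tx_simps less_imp_le)

lemma SW_mkI:
  assumes "h \<le> T" "disc a = 0" "disc c = 0" "disc p = 0"
  shows "SW N (mkI a c p h T) x = (\<Sum>t\<in>{1..N}. val a * (\<Sum>i<h. x i t)
      + val c * (\<Sum>i\<in>{h..<2*h}. x i t) + val p * (\<Sum>i\<in>{2*h..<h+T}. x i t))"
  unfolding SW_def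
proof (rule sum.cong[OF refl])
  fix t
  show "(\<Sum>i\<in>dom (mkI a c p h T). x i t * value_at (the (mkI a c p h T i)) t) =
    val a * (\<Sum>i<h. x i t) + val c * (\<Sum>i\<in>{h..<2*h}. x i t) + val p * (\<Sum>i\<in>{2*h..<h+T}. x i t)"
    using sum_mkI'[OF assms(1), where f="\<lambda>i. x i t" and g="\<lambda>tr. value_at tr t" and a=a and c=c and p=p]
    using assms by (simp add: value_at0)
qed

lemma sum_one_point:
  assumes "finite S" "\<forall>t\<in>S. \<forall>t'\<in>S. f t \<noteq> 0 \<longrightarrow> f t' \<noteq> 0 \<longrightarrow> t = t'" "\<forall>t\<in>S. f t \<le> (1::real)"
  shows "sum f S \<le> 1"
  using sum_le_single[of S f 1] assms by auto


lemma sum_pt: "1 \<le> (a::nat) \<Longrightarrow> a \<le> T \<Longrightarrow> (\<Sum>t\<in>{1..T}. if t = a then (1::real) else 0) = 1"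
  by (simp add: sum.delta sum.delta')

lemma row_one:
  fixes y :: "nat \<Rightarrow> nat \<Rightarrow> real"
  assumes "\<forall>i\<in>S. (\<forall>t. y i t = (if t = g i then 1 else 0)) \<and> 1 \<le> g i \<and> g i \<le> T"
  shows "\<forall>i\<in>S. (\<Sum>t\<in>{1..T}. y i t) = 1"
  using assms sum_pt by simp

lemma sum_rows:
  fixes y :: "nat \<Rightarrow> nat \<Rightarrow> real"
  assumes "\<forall>i\<in>S. (\<Sum>t\<in>{1..T}. y i t) = 1" "finite S"
  shows "(\<Sum>t\<in>{1..T}. \<Sum>i\<in>S. y i t) = real (card S)"
proof -
  have "(\<Sum>t\<in>{1..T}. \<Sum>i\<in>S. y i t) = (\<Sum>i\<in>S. \<Sum>t\<in>{1..T}. y i t)" by (rule sum.swap)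
  also have "\<dots> = (\<Sum>i\<in>S. 1)" using assms(1) by simp
  finally show ?thesis by simp
qed

lemma optY:
  assumes Bpos: "\<forall>j<m. B j > 0" and m2: "m \<ge> 2" and hT: "2*h \<le> T"
  defines "I \<equiv> mkI (tA B) (tC B) (tY B h) h T"
    and "y \<equiv> (\<lambda>i t. if i < h+T \<and> t = (if i<h then h+1+i else i-h+1) then 1 else (0::real))"
  shows "opt_integral m B T I y \<and> SW T I y = real h + real T / 2"
proof -
  have hT': "h \<le> T" using hT by simp
  have domI: "dom I = {..<h+T}" unfolding I_def using hT' by (rule dom_mkI)
  have theI: "\<And>i. i < h+T \<Longrightarrow> the (I i) = (if i<h then tA B else if i<2*h then tC B else tY B h)"
    unfolding I_def mkI_def by auto
  have B0: "B 0 > 0" and B1: "B 1 > 0" using Bpos m2 by auto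
  have int: "integral_alloc I y"
    unfolding integral_alloc_def fractional_alloc_def
  proof (intro conjI ballI allI impI)
    fix i t assume i: "i \<in> dom I"
    then have i': "i < h+T" using domI by simp
    show "0 \<le> y i t" "y i t \<le> 1" "y i t \<in> {0,1}" unfolding y_def by auto
    { assume "t < arr (the (I i))"
      then show "y i t = 0" using i' hT unfolding y_def by (auto simp: theI tx_simps split: if_splits) }
  next
    fix i N assume i: "i \<in> dom I"
    show "(\<Sum>t<N. y i t) \<le> 1"
      by (rule sum_one_point) (auto simp: y_def split: if_splits)
  qed
  have resp: "respects_limits m B I y"
    unfolding respects_limits_def
  proof (intro allI impI)
    fix t j assume j: "j < m"
    have Bj: "B j > 0" using Bpos j by simp
    show "(\<Sum>i\<in>dom I. dem (the (I i)) j * y i t) \<le> B j"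
    proof (rule sum_le_single)
      show "finite (dom I)" using domI by simp
      show "0 \<le> B j" using Bj by simp
      show "\<forall>i\<in>dom I. dem (the (I i)) j * y i t \<le> B j"
        using B0 B1 Bj by (auto simp: domI theI tx_simps y_def)
      show "\<forall>i\<in>dom I. \<forall>k\<in>dom I. dem (the (I i)) j * y i t \<noteq> 0 \<longrightarrow> dem (the (I k)) j * y k t \<noteq> 0 \<longrightarrow> i = k"
        using hT by (auto simp: domI theI tx_simps y_def split: if_splits)
    qed
  qed
  have upper: "SW T I y' \<le> real h + real T / 2" if y': "integral_alloc I y'" "respects_limits m B I y'" for y'
  proof -
    have fr: "fractional_alloc I y'" using y' unfolding integral_alloc_def by simp
    have SWe: "SW T I y' = (\<Sum>t\<in>{1..T}. (\<Sum>i<h. y' i t) + 1/2 * ((\<Sum>i\<in>{h..<2*h}. y' i t) + (\<Sum>i\<in>{2*h..<h+T}. y' i t)))"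
      unfolding I_def using hT' by (simp add: SW_mkI tx_simps algebra_simps)
    have LA: "(\<Sum>t\<in>{1..T}. \<Sum>i<h. y' i t) \<le> real h"
      using sumA_le[OF hT'] fr unfolding I_def by blast
    have LCP: "(\<Sum>i\<in>{h..<2*h}. y' i t) + (\<Sum>i\<in>{2*h..<h+T}. y' i t) \<le> 1" for t
    proof -
      have "(\<Sum>i\<in>dom I. dem (the (I i)) 1 * y' i t) \<le> B 1"
        using y'(2) m2 unfolding respects_limits_def by auto
      moreover have "(\<Sum>i\<in>dom I. dem (the (I i)) 1 * y' i t) = B 1 * ((\<Sum>i\<in>{h..<2*h}. y' i t) + (\<Sum>i\<in>{2*h..<h+T}. y' i t))"
        unfolding I_def using sum_mkI[OF hT', where g="\<lambda>tr. dem tr 1" and f="\<lambda>i. y' i t"]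
        by (simp add: tx_simps algebra_simps)
      ultimately show ?thesis using B1 by (simp add: mult_le_cancel_left1)
    qed
    have "(\<Sum>t\<in>{1..T}. (\<Sum>i\<in>{h..<2*h}. y' i t) + (\<Sum>i\<in>{2*h..<h+T}. y' i t)) \<le> (\<Sum>t\<in>{1..T}. 1)"
      by (rule sum_mono) (rule LCP)
    then have "(\<Sum>t\<in>{1..T}. (\<Sum>i\<in>{h..<2*h}. y' i t) + (\<Sum>i\<in>{2*h..<h+T}. y' i t)) \<le> real T" by simp
    then show ?thesis unfolding SWe sum.distrib sum_distrib_left[symmetric] using LA by argo
  qed
  have exact: "SW T I y = real h + real T / 2"
  proof -
    have SWe: "SW T I y = (\<Sum>t\<in>{1..T}. \<Sum>i<h. y i t) + 1/2 * (\<Sum>t\<in>{1..T}. \<Sum>i\<in>{h..<2*h}. y i t) + 1/2 * (\<Sum>t\<in>{1..T}. \<Sum>i\<in>{2*h..<h+T}. y i t)"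
      unfolding I_def using hT' by (simp add: SW_mkI tx_simps sum.distrib sum_distrib_left)
    have r1: "(\<Sum>t\<in>{1..T}. \<Sum>i<h. y i t) = real h"
    proof -
      have "\<forall>i\<in>{..<h}. (\<Sum>t\<in>{1..T}. y i t) = 1"
        by (rule row_one[where g="\<lambda>i. h+1+i"]) (use hT in \<open>auto simp: y_def\<close>)
      then show ?thesis using sum_rows[where S="{..<h}" and T=T and y=y] hT by (simp add: of_nat_diff)
    qed
    have r2: "(\<Sum>t\<in>{1..T}. \<Sum>i\<in>{h..<2*h}. y i t) = real h"
    proof -
      have "\<forall>i\<in>{h..<2*h}. (\<Sum>t\<in>{1..T}. y i t) = 1"
        by (rule row_one[where g="\<lambda>i. i-h+1"]) (use hT in \<open>auto simp: y_def\<close>)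
      then show ?thesis using sum_rows[where S="{h..<2*h}" and T=T and y=y] hT by (simp add: of_nat_diff)
    qed
    have r3: "(\<Sum>t\<in>{1..T}. \<Sum>i\<in>{2*h..<h+T}. y i t) = real T - real h"
    proof -
      have "\<forall>i\<in>{2*h..<h+T}. (\<Sum>t\<in>{1..T}. y i t) = 1"
        by (rule row_one[where g="\<lambda>i. i-h+1"]) (use hT in \<open>auto simp: y_def\<close>)
      then show ?thesis using sum_rows[where S="{2*h..<h+T}" and T=T and y=y] hT by (simp add: of_nat_diff)
    qed
    show ?thesis unfolding SWe r1 r2 r3 by argo
  qed
  show ?thesis unfolding opt_integral_def using int resp upper exact by auto
qed


lemma optX:
  assumes Bpos: "\<forall>j<m. B j > 0" and m2: "m \<ge> 2" and hT: "2*h \<le> T"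
  defines "I \<equiv> mkI (tA B) (tC B) (tX B h) h T"
    and "y \<equiv> (\<lambda>i t. if (i < h \<and> t = i+1) \<or> (2*h \<le> i \<and> i < h+T \<and> t = i-h+1) then 1 else (0::real))"
  shows "opt_integral m B T I y \<and> SW T I y = real T"
proof -
  have hT': "h \<le> T" using hT by simp
  have domI: "dom I = {..<h+T}" unfolding I_def using hT' by (rule dom_mkI)
  have theI: "\<And>i. i < h+T \<Longrightarrow> the (I i) = (if i<h then tA B else if i<2*h then tC B else tX B h)"
    unfolding I_def mkI_def by auto
  have B0: "B 0 > 0" and B1: "B 1 > 0" using Bpos m2 by auto
  have int: "integral_alloc I y"
    unfolding integral_alloc_def fractional_alloc_def
  proof (intro conjI ballI allI impI)
    fix i t assume i: "i \<in> dom I"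
    then have i': "i < h+T" using domI by simp
    show "0 \<le> y i t" "y i t \<le> 1" "y i t \<in> {0,1}" unfolding y_def by auto
    { assume "t < arr (the (I i))"
      then show "y i t = 0" using i' hT unfolding y_def by (auto simp: theI tx_simps split: if_splits) }
  next
    fix i N assume i: "i \<in> dom I"
    show "(\<Sum>t<N. y i t) \<le> 1"
      by (rule sum_one_point) (auto simp: y_def split: if_splits)
  qed
  have resp: "respects_limits m B I y"
    unfolding respects_limits_def
  proof (intro allI impI)
    fix t j assume j: "j < m"
    have Bj: "B j > 0" using Bpos j by simp
    show "(\<Sum>i\<in>dom I. dem (the (I i)) j * y i t) \<le> B j"
    proof (rule sum_le_single)
      show "finite (dom I)" using domI by simp
      show "0 \<le> B j" using Bj by simp
      show "\<forall>i\<in>dom I. dem (the (I i)) j * y i t \<le> B j"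
        using B0 B1 Bj by (auto simp: domI theI tx_simps y_def)
      show "\<forall>i\<in>dom I. \<forall>k\<in>dom I. dem (the (I i)) j * y i t \<noteq> 0 \<longrightarrow> dem (the (I k)) j * y k t \<noteq> 0 \<longrightarrow> i = k"
        using hT by (auto simp: domI theI tx_simps y_def split: if_splits)
    qed
  qed
  have upper: "SW T I y' \<le> real T" if y': "integral_alloc I y'" "respects_limits m B I y'" for y'
  proof -
    have fr: "fractional_alloc I y'" using y' unfolding integral_alloc_def by simp
    have SWe: "SW T I y' = (\<Sum>t\<in>{1..T}. (\<Sum>i<h. y' i t) + 1/2 * (\<Sum>i\<in>{h..<2*h}. y' i t) + (\<Sum>i\<in>{2*h..<h+T}. y' i t))"
      unfolding I_def using hT' by (simp add: SW_mkI tx_simps algebra_simps)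
    have L: "(\<Sum>i<h. y' i t) + (\<Sum>i\<in>{h..<2*h}. y' i t) + (\<Sum>i\<in>{2*h..<h+T}. y' i t) \<le> 1" for t
    proof -
      have "(\<Sum>i\<in>dom I. dem (the (I i)) 0 * y' i t) \<le> B 0"
        using y'(2) m2 unfolding respects_limits_def by auto
      moreover have "(\<Sum>i\<in>dom I. dem (the (I i)) 0 * y' i t) = B 0 * ((\<Sum>i<h. y' i t) + (\<Sum>i\<in>{h..<2*h}. y' i t) + (\<Sum>i\<in>{2*h..<h+T}. y' i t))"
        unfolding I_def using sum_mkI[OF hT', where g="\<lambda>tr. dem tr 0" and f="\<lambda>i. y' i t"]
        by (simp add: tx_simps algebra_simps)
      ultimately show ?thesis using B0 by (simp add: mult_le_cancel_left1)
    qed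
    have Cnn: "0 \<le> (\<Sum>i\<in>{h..<2*h}. y' i t)" for t
    proof (rule sum_nonneg)
      fix i assume "i \<in> {h..<2*h}"
      then have "i \<in> dom I" using domI hT by auto
      then show "0 \<le> y' i t" by (rule frac_nn[OF fr])
    qed
    have "(\<Sum>t\<in>{1..T}. (\<Sum>i<h. y' i t) + 1/2 * (\<Sum>i\<in>{h..<2*h}. y' i t) + (\<Sum>i\<in>{2*h..<h+T}. y' i t)) \<le> (\<Sum>t\<in>{1..T}. 1)"
    proof (rule sum_mono)
      fix t show "(\<Sum>i<h. y' i t) + 1/2 * (\<Sum>i\<in>{h..<2*h}. y' i t) + (\<Sum>i\<in>{2*h..<h+T}. y' i t) \<le> 1"
        using L[of t] Cnn[of t] by argo
    qed
    then show ?thesis unfolding SWe by simp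
  qed
  have exact: "SW T I y = real T"
  proof -
    have SWe: "SW T I y = (\<Sum>t\<in>{1..T}. \<Sum>i<h. y i t) + 1/2 * (\<Sum>t\<in>{1..T}. \<Sum>i\<in>{h..<2*h}. y i t) + (\<Sum>t\<in>{1..T}. \<Sum>i\<in>{2*h..<h+T}. y i t)"
      unfolding I_def using hT' by (simp add: SW_mkI tx_simps sum.distrib sum_distrib_left)
    have r1: "(\<Sum>t\<in>{1..T}. \<Sum>i<h. y i t) = real h"
    proof -
      have "\<forall>i\<in>{..<h}. (\<Sum>t\<in>{1..T}. y i t) = 1"
        by (rule row_one[where g="\<lambda>i. i+1"]) (use hT in \<open>auto simp: y_def\<close>)
      then show ?thesis using sum_rows[where S="{..<h}" and T=T and y=y] hT by simp
    qed
    have r2: "(\<Sum>t\<in>{1..T}. \<Sum>i\<in>{h..<2*h}. y i t) = 0"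
      by (rule sum.neutral) (auto simp: y_def)
    have r3: "(\<Sum>t\<in>{1..T}. \<Sum>i\<in>{2*h..<h+T}. y i t) = real T - real h"
    proof -
      have "\<forall>i\<in>{2*h..<h+T}. (\<Sum>t\<in>{1..T}. y i t) = 1"
        by (rule row_one[where g="\<lambda>i. i-h+1"]) (use hT in \<open>auto simp: y_def\<close>)
      then show ?thesis using sum_rows[where S="{2*h..<h+T}" and T=T and y=y] hT by (simp add: of_nat_diff)
    qed
    show ?thesis unfolding SWe r1 r2 r3 by argo
  qed
  show ?thesis unfolding opt_integral_def using int resp upper exact by auto
qed


lemma win_sum:
  assumes "h \<le> T" "avg_block_size m B D (mkI a c p h T) x" "1 \<le> T0" "1 \<le> K" "j < m" "B j > 0"
    "dem a j = ca * B j" "dem c j = cc * B j" "dem p j = cp * B j"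
  shows "(\<Sum>t\<in>{T0..<T0+K}. ca * (\<Sum>i<h. x i t) + cc * (\<Sum>i\<in>{h..<2*h}. x i t) + cp * (\<Sum>i\<in>{2*h..<h+T}. x i t))
     \<le> real K + D"
proof -
  have "(\<Sum>t\<in>{T0..<T0+K}. \<Sum>i\<in>dom (mkI a c p h T). x i t * dem (the (mkI a c p h T i)) j) \<le> (real K + D) * B j"
    using assms(2-5) unfolding avg_block_size_def by blast
  moreover have "(\<Sum>t\<in>{T0..<T0+K}. \<Sum>i\<in>dom (mkI a c p h T). x i t * dem (the (mkI a c p h T i)) j)
     = (\<Sum>t\<in>{T0..<T0+K}. B j * (ca * (\<Sum>i<h. x i t) + cc * (\<Sum>i\<in>{h..<2*h}. x i t) + cp * (\<Sum>i\<in>{2*h..<h+T}. x i t)))"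
  proof (rule sum.cong[OF refl])
    fix t show "(\<Sum>i\<in>dom (mkI a c p h T). x i t * dem (the (mkI a c p h T i)) j) =
      B j * (ca * (\<Sum>i<h. x i t) + cc * (\<Sum>i\<in>{h..<2*h}. x i t) + cp * (\<Sum>i\<in>{2*h..<h+T}. x i t))"
      using sum_mkI'[OF assms(1), where f="\<lambda>i. x i t" and g="\<lambda>tr. dem tr j" and a=a and c=c and p=p] assms(7-9)
      by (simp add: algebra_simps)
  qed
  ultimately show ?thesis using assms(6) by (simp add: mult.commute sum_distrib_left[symmetric])
qed

lemma ALG_Y:
  assumes Bpos: "\<forall>j<m. B j > 0" and m2: "m \<ge> 2" and hT: "2*h \<le> T" and TN: "T \<le> N" and T1: "1 \<le> T"
    and fr: "fractional_alloc (mkI (tA B) (tC B) (tY B h) h T) x"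
    and av: "avg_block_size m B D (mkI (tA B) (tC B) (tY B h) h T) x"
  shows "SW N (mkI (tA B) (tC B) (tY B h) h T) x \<le> real h + 1/2 * (\<Sum>t\<in>{1..h}. \<Sum>i\<in>{h..<2*h}. x i t) + 1/2 * (real (N-h) + D)"
proof -
  have hT': "h \<le> T" using hT by simp
  have hN: "h < N" using hT TN T1 by simp
  have B1: "B 1 > 0" using Bpos m2 by auto
  have SWe: "SW N (mkI (tA B) (tC B) (tY B h) h T) x = (\<Sum>t\<in>{1..N}. (\<Sum>i<h. x i t) + 1/2 * (\<Sum>i\<in>{h..<2*h}. x i t) + 1/2 * (\<Sum>i\<in>{2*h..<h+T}. x i t))"
    using hT' by (simp add: SW_mkI tx_simps)
  have sa: "(\<Sum>t\<in>{1..N}. \<Sum>i<h. x i t) \<le> real h" using sumA_le[OF hT' fr] .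
  have p0: "\<forall>t\<in>{1..h}. (\<Sum>i\<in>{2*h..<h+T}. x i t) = 0"
  proof
    fix t assume t: "t \<in> {1..h}"
    show "(\<Sum>i\<in>{2*h..<h+T}. x i t) = 0"
    proof (rule sum.neutral, rule ballI)
      fix i assume i: "i \<in> {2*h..<h+T}"
      have "i \<in> dom (mkI (tA B) (tC B) (tY B h) h T)" using i hT' by (simp add: dom_mkI)
      moreover have "t < arr (the (mkI (tA B) (tC B) (tY B h) h T i))" using i t by (simp add: the_mkI tx_simps)
      ultimately show "x i t = 0" by (rule frac_arr[OF fr])
    qed
  qed
  have win: "(\<Sum>t\<in>{h+1..<h+1+(N-h)}. (\<Sum>i\<in>{h..<2*h}. x i t) + (\<Sum>i\<in>{2*h..<h+T}. x i t)) \<le> real (N-h) + D"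
    using win_sum[OF hT' av, of "h+1" "N-h" 1 0 1 1] hN m2 B1 by (simp add: tx_simps)
  show ?thesis unfolding SWe using algY[OF sa p0 win hN] by simp
qed

lemma ALG_X:
  assumes Bpos: "\<forall>j<m. B j > 0" and m2: "m \<ge> 2" and hT: "2*h \<le> T" and TN: "T \<le> N" and h1: "1 \<le> h"
    and fr: "fractional_alloc (mkI (tA B) (tC B) (tX B h) h T) x"
    and av: "avg_block_size m B D (mkI (tA B) (tC B) (tX B h) h T) x"
  shows "SW N (mkI (tA B) (tC B) (tX B h) h T) x \<le> real N + 2*D - 1/2 * (\<Sum>t\<in>{1..h}. \<Sum>i\<in>{h..<2*h}. x i t)"
proof -
  have hT': "h \<le> T" using hT by simp
  have hN: "h < N" using hT TN h1 by simp
  have B0: "B 0 > 0" using Bpos m2 by auto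
  have SWe: "SW N (mkI (tA B) (tC B) (tX B h) h T) x = (\<Sum>t\<in>{1..N}. (\<Sum>i<h. x i t) + 1/2 * (\<Sum>i\<in>{h..<2*h}. x i t) + (\<Sum>i\<in>{2*h..<h+T}. x i t))"
    using hT' by (simp add: SW_mkI tx_simps)
  have nn: "\<forall>t. 0 \<le> (\<Sum>i\<in>{h..<2*h}. x i t)"
  proof
    fix t show "0 \<le> (\<Sum>i\<in>{h..<2*h}. x i t)"
    proof (rule sum_nonneg)
      fix i assume "i \<in> {h..<2*h}"
      then have "i \<in> dom (mkI (tA B) (tC B) (tX B h) h T)" using hT' by (simp add: dom_mkI)
      then show "0 \<le> x i t" by (rule frac_nn[OF fr])
    qed
  qed
  have w1: "(\<Sum>t\<in>{1..<1+h}. (\<Sum>i<h. x i t) + (\<Sum>i\<in>{h..<2*h}. x i t) + (\<Sum>i\<in>{2*h..<h+T}. x i t)) \<le> real h + D"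
    using win_sum[OF hT' av, of 1 h 0 1 1 1] h1 m2 B0 by (simp add: tx_simps)
  have w2: "(\<Sum>t\<in>{h+1..<h+1+(N-h)}. (\<Sum>i<h. x i t) + (\<Sum>i\<in>{h..<2*h}. x i t) + (\<Sum>i\<in>{2*h..<h+T}. x i t)) \<le> real (N-h) + D"
    using win_sum[OF hT' av, of "h+1" "N-h" 0 1 1 1] hN m2 B0 by (simp add: tx_simps)
  show ?thesis unfolding SWe using algX[OF nn w1 w2 hN] by simp
qed


lemma eps_lim:
  fixes \<Delta> :: "nat \<Rightarrow> real" and \<Gamma> :: "nat \<Rightarrow> nat"
  assumes Delta_o: "\<Delta> \<in> o(\<lambda>T. real T)"
    and Gamma_o: "(\<lambda>T. real (\<Gamma> T)) \<in> o(\<lambda>T. real T)"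
  shows "(\<lambda>T. (1 + real (\<Gamma> T) + 2 * \<bar>\<Delta> T\<bar>) / real T) \<longlonglongrightarrow> 0"
proof -
  have d: "(\<lambda>T. \<Delta> T / real T) \<longlonglongrightarrow> 0" using smalloD_tendsto[OF Delta_o] .
  have g: "(\<lambda>T. real (\<Gamma> T) / real T) \<longlonglongrightarrow> 0" using smalloD_tendsto[OF Gamma_o] .
  have "(\<lambda>T. 1 / real T + real (\<Gamma> T) / real T + 2 * \<bar>\<Delta> T / real T\<bar>) \<longlonglongrightarrow> 0 + 0 + 2 * 0"
    by (intro tendsto_add tendsto_mult tendsto_const lim_const_over_n g tendsto_rabs_zero d)
  moreover have "(\<lambda>T. 1 / real T + real (\<Gamma> T) / real T + 2 * \<bar>\<Delta> T / real T\<bar>) = (\<lambda>T. (1 + real (\<Gamma> T) + 2 * \<bar>\<Delta> T\<bar>) / real T)"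
    by (auto simp: fun_eq_iff add_divide_distrib abs_divide)
  ultimately show ?thesis by simp
qed

theorem theorem4:
  fixes m :: nat and B :: "nat \<Rightarrow> real"
    and A :: "nat \<Rightarrow> input \<Rightarrow> alloc"
    and \<Delta> :: "nat \<Rightarrow> real" and \<Gamma> :: "nat \<Rightarrow> nat"
  assumes m2: "m \<ge> 2"
    and Bpos: "\<forall>j<m. B j > 0"
    and onl: "online m A"
    and frac: "\<forall>T I. valid_input m I \<longrightarrow> fractional_alloc I (A T I)"
    and avg: "\<forall>T I. valid_input m I \<longrightarrow> avg_block_size m B (\<Delta> T) I (A T I)"
    and Delta_o: "\<Delta> \<in> o(\<lambda>T. real T)"
    and Gamma_o: "(\<lambda>T. real (\<Gamma> T)) \<in> o(\<lambda>T. real T)"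
  shows "\<exists>\<epsilon> :: nat \<Rightarrow> real. \<epsilon> \<longlonglongrightarrow> 0 \<and>
           (\<forall>T\<ge>1. \<exists>I. valid_input m I \<and> (\<forall>i tr. I i = Some tr \<longrightarrow> disc tr = 0) \<and>
              (\<exists>y. opt_integral m B T I y \<and> SW T I y > 0 \<and>
                   SW (T + \<Gamma> T) I (A T I) / SW T I y \<le> 7/8 + \<epsilon> T))"
proof -
  define \<epsilon> where "\<epsilon> = (\<lambda>T. (1 + real (\<Gamma> T) + 2 * \<bar>\<Delta> T\<bar>) / real T)"
  have lim: "\<epsilon> \<longlonglongrightarrow> 0" unfolding \<epsilon>_def by (rule eps_lim[OF Delta_o Gamma_o])
  have main: "\<exists>I. valid_input m I \<and> (\<forall>i tr. I i = Some tr \<longrightarrow> disc tr = 0) \<and>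
              (\<exists>y. opt_integral m B T I y \<and> SW T I y > 0 \<and>
                   SW (T + \<Gamma> T) I (A T I) / SW T I y \<le> 7/8 + \<epsilon> T)" if T1: "1 \<le> T" for T
  proof -
  define h where "h = T div 2"
  have hT: "2*h \<le> T" and Th: "T \<le> 2*h+1" unfolding h_def by auto
  define N where "N = T + \<Gamma> T"
  have TN: "T \<le> N" unfolding N_def by simp
  have epsT: "\<epsilon> T * real T = 1 + real (\<Gamma> T) + 2 * \<bar>\<Delta> T\<bar>" unfolding \<epsilon>_def using T1 by simp
  have eps0: "\<epsilon> T \<ge> 0" unfolding \<epsilon>_def by simp
  define IX where "IX = mkI (tA B) (tC B) (tX B h) h T"
  define IY where "IY = mkI (tA B) (tC B) (tY B h) h T"
  have vX: "valid_input m IX" unfolding IX_def by (intro valid_mkI valid_txs[OF Bpos m2])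
  have vY: "valid_input m IY" unfolding IY_def by (intro valid_mkI valid_txs[OF Bpos m2])
  have dX: "\<forall>i tr. IX i = Some tr \<longrightarrow> disc tr = 0" unfolding IX_def mkI_def by (auto simp: tx_simps split: if_splits)
  have dY: "\<forall>i tr. IY i = Some tr \<longrightarrow> disc tr = 0" unfolding IY_def mkI_def by (auto simp: tx_simps split: if_splits)
  define c1 where "c1 = (\<Sum>t\<in>{1..h}. \<Sum>i\<in>{h..<2*h}. A T IY i t)"
  show "\<exists>I. valid_input m I \<and> (\<forall>i tr. I i = Some tr \<longrightarrow> disc tr = 0) \<and>
              (\<exists>y. opt_integral m B T I y \<and> SW T I y > 0 \<and>
                   SW (T + \<Gamma> T) I (A T I) / SW T I y \<le> 7/8 + \<epsilon> T)"
  proof (cases "c1 \<le> real h / 2")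
    case True
    obtain y where y: "opt_integral m B T IY y" "SW T IY y = real h + real T / 2"
      using optY[OF Bpos m2 hT] unfolding IY_def by blast
    have pos: "SW T IY y > 0" using y(2) T1 by simp
    have alg: "SW N IY (A T IY) \<le> real h + 1/2 * c1 + 1/2 * (real (N-h) + \<Delta> T)"
      unfolding c1_def IY_def
      by (rule ALG_Y[OF Bpos m2 hT TN T1]) (use frac avg vY in \<open>auto simp: IY_def\<close>)
    have Nh: "real (N - h) = real T + real (\<Gamma> T) - real h" using hT unfolding N_def by (simp add: of_nat_diff)
    have "(7/8 + \<epsilon> T) * SW T IY y = 7/8 * (real h + real T / 2) + \<epsilon> T * real h + (\<epsilon> T * real T) / 2"
      unfolding y(2) by (simp add: algebra_simps)
    moreover have "\<epsilon> T * real h \<ge> 0" using eps0 by simp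
    moreover have "real T \<le> 2 * real h + 1" using Th by linarith
    ultimately have "SW N IY (A T IY) \<le> (7/8 + \<epsilon> T) * SW T IY y"
    proof -
      have ab: "\<Delta> T \<le> \<bar>\<Delta> T\<bar>" by simp
      show ?thesis using alg True Nh epsT ab \<open>0 \<le> \<epsilon> T * real h\<close> \<open>real T \<le> 2 * real h + 1\<close>
        unfolding \<open>(7/8 + \<epsilon> T) * SW T IY y = _\<close> by argo
    qed
    then have "SW N IY (A T IY) / SW T IY y \<le> 7/8 + \<epsilon> T" using pos by (simp add: divide_le_eq)
    then show ?thesis using vY dY y pos unfolding N_def by blast
  next
    case False
    then have h1: "1 \<le> h" unfolding c1_def by (cases h) auto
    obtain y where y: "opt_integral m B T IX y" "SW T IX y = real T"
      using optX[OF Bpos m2 hT] unfolding IX_def by blast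
    have pos: "SW T IX y > 0" using y(2) T1 by simp
    have same: "A T IX i t = A T IY i t" if t: "t \<in> {1..h}" and i: "i \<in> {h..<2*h}" for i t
    proof -
      have arrE: "arrived t IX = arrived t IY"
        using t hT unfolding IX_def IY_def arrived_def mkI_def by (auto simp: tx_simps fun_eq_iff)
      have "i \<in> dom (arrived t IX)"
        using t i hT unfolding IX_def arrived_def mkI_def by (auto simp: tx_simps)
      then show ?thesis using onl vX vY arrE unfolding online_def by blast
    qed
    have c1X: "(\<Sum>t\<in>{1..h}. \<Sum>i\<in>{h..<2*h}. A T IX i t) = c1"
      unfolding c1_def using same by (intro sum.cong refl) auto
    have alg: "SW N IX (A T IX) \<le> real N + 2 * \<Delta> T - 1/2 * c1"
      unfolding c1X[symmetric] IX_def
      by (rule ALG_X[OF Bpos m2 hT TN h1]) (use frac avg vX in \<open>auto simp: IX_def\<close>)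
    have "(7/8 + \<epsilon> T) * SW T IX y = 7/8 * real T + \<epsilon> T * real T"
      unfolding y(2) by (simp add: algebra_simps)
    moreover have "real T \<le> 2 * real h + 1" using Th by linarith
    moreover have "real N = real T + real (\<Gamma> T)" unfolding N_def by simp
    ultimately have "SW N IX (A T IX) \<le> (7/8 + \<epsilon> T) * SW T IX y"
    proof -
      have ab: "\<Delta> T \<le> \<bar>\<Delta> T\<bar>" by simp
      show ?thesis using alg False epsT ab \<open>real T \<le> 2 * real h + 1\<close> \<open>real N = real T + real (\<Gamma> T)\<close>
        unfolding \<open>(7/8 + \<epsilon> T) * SW T IX y = _\<close> by argo
    qed
    then have "SW N IX (A T IX) / SW T IX y \<le> 7/8 + \<epsilon> T" using pos by (simp add: divide_le_eq)
    then show ?thesis using vX dX y pos unfolding N_def by blast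
  qed
qed
  show ?thesis using lim main by blast
qed

end
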